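(* Let $N\ge 1$ and let $S\subset\mathbb{P}^1\times\mathbb{P}^1$ be a real curve of bidegree $(N,N)$ not intersecting the anti-diagonal $\bar\Delta$, and suppose $S$ admits a grid determined by distinct points $\gamma_0,\dots,\gamma_N\in\mathbb{C}$, i.e. $$\{(-1/\bar\gamma_i,\gamma_j)\ :\ 0\le i\neq j\le N\}\subset S .$$ Then there exist positive real numbers $\lambda_0,\dots,\lambda_N$ such that $S$ is the curve $$\sum_{i=0}^N\lambda_i^2\prod_{\substack{j=0\\ j\neq i}}^N(\zeta-\gamma_j)(1+\eta\bar\gamma_j)=0,$$ i.e. $S$ is the spectral curve determined by the JNR data with poles $\gamma_0,\dots,\gamma_N$ and weights $\lambda_0,\dots,\lambda_N$.
   Context: $\mathbb{P}^1\times\mathbb{P}^1$ has affine coordinates $(\eta,\zeta)$. A curve of bidegree $(N,N)$ is the zero set of a nonzero polynomial $p(\eta,\zeta)$ of degree at most $N$ in each variable (a section of $\mathcal{O}(N,N)$). The anti-diagonal is $\bar\Delta=\{(\eta,\zeta):\eta=-1/\bar\zeta\}$. The curve is real if it is invariant under the anti-holomorphic involution $\tau(\eta,\zeta)=(-1/\bar\zeta,-1/\bar\eta)$. For $\gamma=0$ the point $-1/\bar\gamma$ means $\infty\in\mathbb{P}^1$. A grid determined by distinct points $\gamma_0,\dots,\gamma_N$ is the set $\{(-1/\bar\gamma_i,\gamma_j):0\le i\neq j\le N\}$, and a curve admits a grid if it contains such a set. *)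

theory Defs
  imports Complex_Main
begin

text \<open>Points of P^1 are represented by complex option: Some z is the
affine coordinate z, None is the point at infinity.\<close>

type_synonym P1 = "complex option"

fun hc :: "P1 \<Rightarrow> complex \<times> complex" where
  "hc None = (0, 1)"
| "hc (Some z) = (1, z)"

fun antip :: "P1 \<Rightarrow> P1" where
  "antip None = Some 0"
| "antip (Some z) = (if z = 0 then None else Some (- 1 / cnj z))"

definition tau :: "P1 \<times> P1 \<Rightarrow> P1 \<times> P1" where
  "tau pq = (antip (snd pq), antip (fst pq))"

definition antidiag :: "(P1 \<times> P1) set" where
  "antidiag = {(antip z, z) | z. True}"

definition curve_of :: "(complex \<times> complex \<Rightarrow> complex \<times> complex \<Rightarrow> complex) \<Rightarrow> (P1 \<times> P1) set" where
  "curve_of F = {(x, y). F (hc x) (hc y) = 0}"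

text \<open>Bidegree (N,N) homogenisation of p(eta,zeta) = sum_{i,j<=N} c i j eta^i zeta^j.
  Homogeneous coordinates (a0,a1) for eta = a1/a0 and (b0,b1) for zeta = b1/b0.\<close>
definition bihom :: "nat \<Rightarrow> (nat \<Rightarrow> nat \<Rightarrow> complex) \<Rightarrow> complex \<times> complex \<Rightarrow> complex \<times> complex \<Rightarrow> complex" where
  "bihom N c a b = (\<Sum>i\<le>N. \<Sum>j\<le>N. c i j * snd a ^ i * fst a ^ (N - i) * snd b ^ j * fst b ^ (N - j))"

definition jnr_hom :: "nat \<Rightarrow> (nat \<Rightarrow> complex) \<Rightarrow> (nat \<Rightarrow> real) \<Rightarrow> complex \<times> complex \<Rightarrow> complex \<times> complex \<Rightarrow> complex" where
  "jnr_hom N \<gamma> lam a b = (\<Sum>i\<le>N. complex_of_real ((lam i)\<^sup>2) *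
      (\<Prod>j\<in>{..N} - {i}. (snd b - \<gamma> j * fst b) * (fst a + snd a * cnj (\<gamma> j))))"

end

theory Submission
  imports Defs "HOL-Computational_Algebra.Polynomial" "HOL-Complex_Analysis.Complex_Analysis"
begin

definition hform :: "nat \<Rightarrow> (complex \<times> complex \<Rightarrow> complex) \<Rightarrow> bool" where
  "hform n F \<longleftrightarrow> (\<exists>p. degree p \<le> n \<and>
      (\<forall>a0 a1. a0 \<noteq> 0 \<longrightarrow> F (a0, a1) = a0 ^ n * poly p (a1 / a0)) \<and>
      (\<forall>a1. F (0, a1) = coeff p n * a1 ^ n))"

lemma hform_lin:
  assumes "hform n F" "hform n G"
  shows "hform n (\<lambda>a. u * F a + v * G a)"
proof -
  obtain p where p: "degree p \<le> n" "\<forall>a0 a1. a0 \<noteq> 0 \<longrightarrow> F (a0, a1) = a0 ^ n * poly p (a1 / a0)"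
    "\<forall>a1. F (0, a1) = coeff p n * a1 ^ n" using assms(1) unfolding hform_def by blast
  obtain q where q: "degree q \<le> n" "\<forall>a0 a1. a0 \<noteq> 0 \<longrightarrow> G (a0, a1) = a0 ^ n * poly q (a1 / a0)"
    "\<forall>a1. G (0, a1) = coeff q n * a1 ^ n" using assms(2) unfolding hform_def by blast
  have d: "degree (smult u p + smult v q) \<le> n"
    by (meson degree_add_le degree_smult_le order.trans p(1) q(1))
  show ?thesis unfolding hform_def
  proof (intro exI[of _ "smult u p + smult v q"] conjI allI impI d)
    fix a0 a1 :: complex assume "a0 \<noteq> 0"
    then show "u * F (a0, a1) + v * G (a0, a1) = a0 ^ n * poly (smult u p + smult v q) (a1 / a0)"
      using p(2) q(2) by (simp add: ring_distribs)
  next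
    fix a1 :: complex
    show "u * F (0, a1) + v * G (0, a1) = coeff (smult u p + smult v q) n * a1 ^ n"
      using p(3) q(3) by (simp add: ring_distribs)
  qed
qed

lemma hform_0: "hform n (\<lambda>a. 0)"
  unfolding hform_def by (rule exI[of _ 0]) auto

lemma hform_sum:
  assumes "finite I" "\<forall>i\<in>I. hform n (F i)"
  shows "hform n (\<lambda>a. \<Sum>i\<in>I. u i * F i a)"
  using assms
proof (induction I rule: finite_induct)
  case empty then show ?case by (simp add: hform_0)
next
  case (insert x I)
  then have "hform n (\<lambda>a. u x * F x a + 1 * (\<Sum>i\<in>I. u i * F i a))"
    by (intro hform_lin) auto
  then show ?case using insert by simp
qed

lemma coeff_mult_bound:
  fixes p q :: "'a::idom poly"
  assumes "degree p \<le> m" "degree q \<le> n"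
  shows "coeff (p * q) (m + n) = coeff p m * coeff q n"
proof (cases "degree p = m \<and> degree q = n")
  case True then show ?thesis using coeff_mult_degree_sum[of p q] by simp
next
  case False
  then have "coeff p m * coeff q n = 0" using assms
    by (metis coeff_eq_0 le_neq_implies_less mult_eq_0_iff)
  moreover have "degree (p * q) < m + n"
  proof (cases "p = 0 \<or> q = 0")
    case True
    then show ?thesis using False assms by auto
  next
    case False': False
    then have "degree (p*q) = degree p + degree q" by (simp add: degree_mult_eq)
    then show ?thesis using False assms by auto
  qed
  ultimately show ?thesis by (simp add: coeff_eq_0)
qed

lemma hform_mult:
  assumes "hform m F" "hform n G"
  shows "hform (m + n) (\<lambda>a. F a * G a)"
proof -
  obtain p where p: "degree p \<le> m" "\<forall>a0 a1. a0 \<noteq> 0 \<longrightarrow> F (a0, a1) = a0 ^ m * poly p (a1 / a0)"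
    "\<forall>a1. F (0, a1) = coeff p m * a1 ^ m" using assms(1) unfolding hform_def by blast
  obtain q where q: "degree q \<le> n" "\<forall>a0 a1. a0 \<noteq> 0 \<longrightarrow> G (a0, a1) = a0 ^ n * poly q (a1 / a0)"
    "\<forall>a1. G (0, a1) = coeff q n * a1 ^ n" using assms(2) unfolding hform_def by blast
  have d: "degree (p * q) \<le> m + n"
    by (meson add_mono degree_mult_le order.trans p(1) q(1))
  show ?thesis unfolding hform_def
  proof (intro exI[of _ "p * q"] conjI allI impI d)
    fix a0 a1 :: complex assume "a0 \<noteq> 0"
    then show "F (a0, a1) * G (a0, a1) = a0 ^ (m + n) * poly (p * q) (a1 / a0)"
      using p(2) q(2) by (simp add: power_add)
  next
    fix a1 :: complex
    show "F (0, a1) * G (0, a1) = coeff (p * q) (m + n) * a1 ^ (m + n)"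
      using p(3) q(3) coeff_mult_bound[OF p(1) q(1)] by (simp add: power_add)
  qed
qed

lemma hform_lin1: "hform 1 (\<lambda>a. \<alpha> * fst a + \<beta> * snd a)"
  unfolding hform_def by (rule exI[of _ "[:\<alpha>, \<beta>:]"]) (auto simp: field_simps)

lemma hform_prod:
  assumes "finite J"
  shows "hform (card J) (\<lambda>a. \<Prod>j\<in>J. \<alpha> j * fst a + \<beta> j * snd a)"
  using assms
proof (induction J rule: finite_induct)
  case empty
  show ?case unfolding hform_def by (rule exI[of _ 1]) auto
next
  case (insert x J)
  have "hform (1 + card J) (\<lambda>a. (\<alpha> x * fst a + \<beta> x * snd a) * (\<Prod>j\<in>J. \<alpha> j * fst a + \<beta> j * snd a))"
    by (intro hform_mult hform_lin1 insert.IH)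
  then show ?case using insert by simp
qed

lemma hform_zero_pts:
  assumes "hform n F" "finite X" "card X > n" "\<forall>x\<in>X. F (hc x) = 0"
  shows "F a = 0"
proof -
  obtain p where p: "degree p \<le> n" "\<forall>a0 a1. a0 \<noteq> 0 \<longrightarrow> F (a0, a1) = a0 ^ n * poly p (a1 / a0)"
    "\<forall>a1. F (0, a1) = coeff p n * a1 ^ n" using assms(1) unfolding hform_def by blast
  have p0: "p = 0"
  proof (rule ccontr)
    assume pn: "p \<noteq> 0"
    define Y where "Y = {z. Some z \<in> X}"
    have Ysub: "Y \<subseteq> {z. poly p z = 0}"
    proof
      fix z assume "z \<in> Y"
      then have "F (1, z) = 0" using assms(4) unfolding Y_def by (metis hc.simps(2) mem_Collect_eq)
      moreover have "F (1, z) = 1 ^ n * poly p (z / 1)" using p(2) by simp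
      ultimately show "z \<in> {z. poly p z = 0}" by simp
    qed
    have finR: "finite {z. poly p z = 0}" using pn poly_roots_finite by blast
    have cY: "card Y \<le> degree p"
      using card_mono[OF finR Ysub] card_poly_roots_bound[OF pn] by linarith
    have fY: "finite Y" using finR Ysub finite_subset by blast
    show False
    proof (cases "None \<in> X")
      case True
      then have "F (0, 1) = 0" using assms(4) by (metis hc.simps(1))
      then have "coeff p n = 0" using p(3)[rule_format, of 1] by simp
      then have "degree p < n" using p(1) pn
        by (metis le_neq_implies_less leading_coeff_0_iff)
      have "X \<subseteq> insert None (Some ` Y)"
      proof
        fix x assume "x \<in> X" then show "x \<in> insert None (Some ` Y)" by (cases x) (auto simp: Y_def)
      qed
      then have "card X \<le> card (insert None (Some ` Y))"
        by (intro card_mono) (use fY in auto)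
      also have "\<dots> \<le> Suc (card (Some ` Y))" by (simp add: card_insert_le_m1 card_insert_if)
      also have "\<dots> \<le> Suc (card Y)" using card_image_le[OF fY] by simp
      finally show False using cY \<open>degree p < n\<close> assms(3) by linarith
    next
      case False
      have "X \<subseteq> Some ` Y"
      proof
        fix x assume "x \<in> X" then show "x \<in> Some ` Y" using False by (cases x) (auto simp: Y_def)
      qed
      then have "card X \<le> card (Some ` Y)"
        by (intro card_mono) (use fY in auto)
      also have "\<dots> \<le> card Y" using card_image_le[OF fY] by simp
      finally show False using cY p(1) assms(3) by linarith
    qed
  qed
  obtain a0 a1 where a: "a = (a0, a1)" by (cases a)
  show ?thesis
  proof (cases "a0 = 0")
    case True then show ?thesis using p(3) p0 unfolding a by simp
  next
    case False then show ?thesis using p(2) p0 unfolding a by simp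
  qed
qed

lemma sum_single:
  assumes "finite I" "l \<in> I" "\<And>k. k \<in> I \<Longrightarrow> k \<noteq> l \<Longrightarrow> f k = 0"
  shows "(\<Sum>k\<in>I. f k) = f l"
proof -
  have "(\<Sum>k\<in>I. f k) = f l + (\<Sum>k\<in>I - {l}. f k)" using assms by (simp add: sum.remove)
  also have "(\<Sum>k\<in>I - {l}. f k) = 0" using assms by (intro sum.neutral) auto
  finally show ?thesis by simp
qed

lemma hform_coeffs: "hform n (\<lambda>a. \<Sum>i\<le>n. e i * snd a ^ i * fst a ^ (n - i))"
proof -
  define p where "p = (\<Sum>i\<le>n. monom (e i) i)"
  have d: "degree p \<le> n" unfolding p_def by (intro degree_sum_le) (auto simp: degree_monom_le intro: order.trans[OF degree_monom_le])
  have pp: "poly p z = (\<Sum>i\<le>n. e i * z ^ i)" for z unfolding p_def by (simp add: poly_sum poly_monom)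
  have cp: "coeff p n = e n" unfolding p_def by (simp add: coeff_sum)
  show ?thesis unfolding hform_def
  proof (intro exI[of _ p] conjI allI impI d)
    fix a0 a1 :: complex assume a0: "a0 \<noteq> 0"
    have "a0 ^ n * poly p (a1 / a0) = (\<Sum>i\<le>n. e i * (a0 ^ n * (a1 / a0) ^ i))"
      by (simp add: pp sum_distrib_left mult_ac)
    also have "\<dots> = (\<Sum>i\<le>n. e i * a1 ^ i * a0 ^ (n - i))"
    proof (rule sum.cong[OF refl])
      fix i assume "i \<in> {..n}"
      then have "a0 ^ n = a0 ^ (n - i) * a0 ^ i" by (simp add: power_add[symmetric])
      then show "e i * (a0 ^ n * (a1 / a0) ^ i) = e i * a1 ^ i * a0 ^ (n - i)"
        using a0 by (simp add: power_divide)
    qed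
    finally show "(\<Sum>i\<le>n. e i * snd (a0, a1) ^ i * fst (a0, a1) ^ (n - i)) = a0 ^ n * poly p (a1 / a0)"
      by simp
  next
    fix a1 :: complex
    have "(\<Sum>i\<le>n. e i * a1 ^ i * 0 ^ (n - i)) = e n * a1 ^ n * 0 ^ (n - n)"
      by (rule sum_single) auto
    then show "(\<Sum>i\<le>n. e i * snd (0::complex, a1) ^ i * fst (0::complex, a1) ^ (n - i)) = coeff p n * a1 ^ n"
      by (simp add: cp)
  qed
qed

lemma hform_bihom_a: "hform N (\<lambda>a. bihom N c a b)"
proof -
  have "bihom N c a b = (\<Sum>i\<le>N. (\<Sum>j\<le>N. c i j * snd b ^ j * fst b ^ (N - j)) * snd a ^ i * fst a ^ (N - i))" for a
    unfolding bihom_def by (simp add: sum_distrib_left mult_ac)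
  then show ?thesis using hform_coeffs[of N "\<lambda>i. \<Sum>j\<le>N. c i j * snd b ^ j * fst b ^ (N - j)"] by simp
qed

lemma hform_bihom_b: "hform N (\<lambda>b. bihom N c a b)"
proof -
  have "bihom N c a b = (\<Sum>j\<le>N. (\<Sum>i\<le>N. c i j * snd a ^ i * fst a ^ (N - i)) * snd b ^ j * fst b ^ (N - j))" for b
    unfolding bihom_def by (subst sum.swap) (simp add: sum_distrib_left mult_ac)
  then show ?thesis using hform_coeffs[of N "\<lambda>j. \<Sum>i\<le>N. c i j * snd a ^ i * fst a ^ (N - i)"] by simp
qed

lemma hform_interp:
  fixes L :: "nat \<Rightarrow> complex \<times> complex \<Rightarrow> complex" and w :: "nat \<Rightarrow> P1"
  assumes F: "hform n F" and I: "finite I" "card I > n" and L: "\<forall>k\<in>I. hform n (L k)"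
    and w: "inj_on w I"
    and z: "\<forall>k\<in>I. \<forall>l\<in>I. l \<noteq> k \<longrightarrow> L k (hc (w l)) = 0"
    and nz: "\<forall>k\<in>I. L k (hc (w k)) \<noteq> 0"
  shows "F a = (\<Sum>k\<in>I. F (hc (w k)) / L k (hc (w k)) * L k a)"
proof -
  define G where "G = (\<lambda>a. 1 * F a + (-1) * (\<Sum>k\<in>I. F (hc (w k)) / L k (hc (w k)) * L k a))"
  have hG: "hform n G" unfolding G_def
    by (intro hform_lin F hform_sum I L)
  have "G (hc x) = 0" if xI: "x \<in> w ` I" for x
  proof -
    obtain l where l: "l \<in> I" "x = w l" using xI by blast
    have "(\<Sum>k\<in>I. F (hc (w k)) / L k (hc (w k)) * L k (hc (w l))) =
          F (hc (w l)) / L l (hc (w l)) * L l (hc (w l))"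
      by (rule sum_single) (use I l z in auto)
    then show ?thesis using nz l unfolding G_def by simp
  qed
  then have "G a = 0"
    by (intro hform_zero_pts[OF hG, of "w ` I"]) (use I w in \<open>auto simp: card_image\<close>)
  then show ?thesis unfolding G_def by simp
qed

definition Af :: "(nat \<Rightarrow> complex) \<Rightarrow> nat \<Rightarrow> nat \<Rightarrow> complex \<times> complex \<Rightarrow> complex" where
  "Af \<gamma> N i a = (\<Prod>j\<in>{..N} - {i}. fst a + snd a * cnj (\<gamma> j))"

definition Bf :: "(nat \<Rightarrow> complex) \<Rightarrow> nat \<Rightarrow> nat \<Rightarrow> complex \<times> complex \<Rightarrow> complex" where
  "Bf \<gamma> N i b = (\<Prod>j\<in>{..N} - {i}. snd b - \<gamma> j * fst b)"

lemma card_minus_one: "i \<le> N \<Longrightarrow> card ({..N} - {i}) = N"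
  by simp

lemma hform_Af: "i \<le> N \<Longrightarrow> hform N (Af \<gamma> N i)"
proof -
  assume i: "i \<le> N"
  have "hform (card ({..N} - {i})) (\<lambda>a. \<Prod>j\<in>{..N} - {i}. 1 * fst a + cnj (\<gamma> j) * snd a)"
    by (rule hform_prod) simp
  moreover have "Af \<gamma> N i = (\<lambda>a. \<Prod>j\<in>{..N} - {i}. 1 * fst a + cnj (\<gamma> j) * snd a)"
    unfolding Af_def by (simp add: mult.commute)
  ultimately show ?thesis using i by simp
qed

lemma hform_Bf: "i \<le> N \<Longrightarrow> hform N (Bf \<gamma> N i)"
proof -
  assume i: "i \<le> N"
  have "hform (card ({..N} - {i})) (\<lambda>a. \<Prod>j\<in>{..N} - {i}. (- \<gamma> j) * fst a + 1 * snd a)"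
    by (rule hform_prod) simp
  moreover have "Bf \<gamma> N i = (\<lambda>a. \<Prod>j\<in>{..N} - {i}. (- \<gamma> j) * fst a + 1 * snd a)"
    unfolding Bf_def by simp
  ultimately show ?thesis using i by simp
qed

lemma antip_factor_zero: "fst (hc (antip (Some g))) + snd (hc (antip (Some g))) * cnj g = 0"
  by (cases "g = 0") (auto simp: field_simps)

lemma antip_factor_nz:
  assumes "g \<noteq> h"
  shows "fst (hc (antip (Some g))) + snd (hc (antip (Some g))) * cnj h \<noteq> 0"
proof (cases "g = 0")
  case True then show ?thesis using assms by simp
next
  case False
  have "1 + (- 1 / cnj g) * cnj h \<noteq> 0"
  proof
    assume "1 + (- 1 / cnj g) * cnj h = 0"
    then have "cnj g = cnj h" using False by (simp add: field_simps)
    then show False using assms by simp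
  qed
  then show ?thesis using False by simp
qed

lemma Af_u_zero:
  assumes "k \<le> N" "l \<le> N" "l \<noteq> k"
  shows "Af \<gamma> N k (hc (antip (Some (\<gamma> l)))) = 0"
  unfolding Af_def
  by (rule prod_zero) (use assms antip_factor_zero[of "\<gamma> l"] in \<open>auto intro!: bexI[of _ l]\<close>)

lemma Af_u_nz:
  assumes "inj_on \<gamma> {..N}" "k \<le> N"
  shows "Af \<gamma> N k (hc (antip (Some (\<gamma> k)))) \<noteq> 0"
  unfolding Af_def
proof (subst prod_zero_iff, simp, rule notI)
  assume "\<exists>j\<in>{..N} - {k}. fst (hc (antip (Some (\<gamma> k)))) + snd (hc (antip (Some (\<gamma> k)))) * cnj (\<gamma> j) = 0"
  then obtain j where j: "j \<le> N" "j \<noteq> k" and e: "fst (hc (antip (Some (\<gamma> k)))) + snd (hc (antip (Some (\<gamma> k)))) * cnj (\<gamma> j) = 0"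
    by auto
  have "\<gamma> k \<noteq> \<gamma> j" using assms j by (metis atMost_iff inj_on_def)
  then show False using antip_factor_nz e by blast
qed

lemma Bf_v_zero:
  assumes "k \<le> N" "l \<le> N" "l \<noteq> k"
  shows "Bf \<gamma> N k (hc (Some (\<gamma> l))) = 0"
  unfolding Bf_def
  by (rule prod_zero) (use assms in \<open>auto intro!: bexI[of _ l]\<close>)

lemma Bf_v_nz:
  assumes "inj_on \<gamma> {..N}" "k \<le> N"
  shows "Bf \<gamma> N k (hc (Some (\<gamma> k))) \<noteq> 0"
  unfolding Bf_def using assms by (auto simp: inj_on_def)

lemma antip_inj:
  assumes "antip (Some g) = antip (Some h)" shows "g = h"
proof (cases "g = 0")
  case True
  then have "antip (Some h) = None" using assms by simp
  then show ?thesis using True by (cases "h = 0") auto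
next
  case False
  then have h: "h \<noteq> 0" using assms by (cases "h = 0") auto
  then have "- 1 / cnj g = - 1 / cnj h" using assms False by simp
  then have "cnj g = cnj h" by simp
  then show ?thesis by simp
qed

lemma diag_form:
  assumes inj: "inj_on \<gamma> {..N}"
    and grid: "\<forall>i\<le>N. \<forall>j\<le>N. i \<noteq> j \<longrightarrow> bihom N c (hc (antip (Some (\<gamma> i)))) (hc (Some (\<gamma> j))) = 0"
  shows "bihom N c a b = (\<Sum>k\<le>N. bihom N c (hc (antip (Some (\<gamma> k)))) (hc (Some (\<gamma> k)))
            / (Af \<gamma> N k (hc (antip (Some (\<gamma> k)))) * Bf \<gamma> N k (hc (Some (\<gamma> k))))
            * Af \<gamma> N k a * Bf \<gamma> N k b)"
proof -
  define u where "u k = hc (antip (Some (\<gamma> k)))" for k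
  define v where "v k = hc (Some (\<gamma> k))" for k
  have injw: "inj_on (\<lambda>k. antip (Some (\<gamma> k))) {..N}"
    using inj unfolding inj_on_def by (metis antip_inj)
  have injv: "inj_on (\<lambda>k. Some (\<gamma> k)) {..N}"
    using inj unfolding inj_on_def by simp
  have s1: "bihom N c a b = (\<Sum>k\<le>N. bihom N c (u k) b / Af \<gamma> N k (u k) * Af \<gamma> N k a)"
    unfolding u_def
    by (rule hform_interp[OF hform_bihom_a, of "{..N}" N "Af \<gamma> N" "\<lambda>k. antip (Some (\<gamma> k))"])
       (use injw hform_Af Af_u_zero Af_u_nz[OF inj] in auto)
  have s2: "bihom N c (u k) b = bihom N c (u k) (v k) / Bf \<gamma> N k (v k) * Bf \<gamma> N k b" if k: "k \<le> N" for k
  proof -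
    have "bihom N c (u k) b = (\<Sum>l\<le>N. bihom N c (u k) (v l) / Bf \<gamma> N l (v l) * Bf \<gamma> N l b)"
      unfolding v_def
      by (rule hform_interp[OF hform_bihom_b, of "{..N}" N "Bf \<gamma> N" "\<lambda>k. Some (\<gamma> k)"])
         (use injv hform_Bf Bf_v_zero Bf_v_nz[OF inj] in auto)
    also have "\<dots> = bihom N c (u k) (v k) / Bf \<gamma> N k (v k) * Bf \<gamma> N k b"
      by (rule sum_single) (use k grid in \<open>auto simp: u_def v_def\<close>)
    finally show ?thesis .
  qed
  have "bihom N c a b = (\<Sum>k\<le>N. bihom N c (u k) (v k) / Bf \<gamma> N k (v k) * Bf \<gamma> N k b / Af \<gamma> N k (u k) * Af \<gamma> N k a)"
    unfolding s1 by (intro sum.cong) (auto simp: s2)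
  also have "\<dots> = (\<Sum>k\<le>N. bihom N c (u k) (v k) / (Af \<gamma> N k (u k) * Bf \<gamma> N k (v k)) * Af \<gamma> N k a * Bf \<gamma> N k b)"
    by (intro sum.cong) (auto simp: field_simps)
  finally show ?thesis unfolding u_def v_def .
qed

lemma antidiag_factor:
  "\<exists>\<kappa>. \<kappa> \<noteq> 0 \<and> (\<forall>g. (fst (hc (antip (Some z))) + snd (hc (antip (Some z))) * cnj g) *
        (snd (hc (Some z)) - g * fst (hc (Some z))) = \<kappa> * complex_of_real ((cmod (z - g))\<^sup>2))"
proof (cases "z = 0")
  case True
  show ?thesis
    by (rule exI[of _ "-1"]) (auto simp: True, metis complex_norm_square mult.commute of_real_power)
next
  case False
  show ?thesis
  proof (rule exI[of _ "1 / cnj z"], intro conjI allI)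
    show "1 / cnj z \<noteq> 0" using False by simp
    fix g
    have e: "complex_of_real ((cmod (z - g))\<^sup>2) = (z - g) * cnj (z - g)" by (rule complex_norm_square)
    have "(1 + (- 1 / cnj z) * cnj g) * (z - g) = 1 / cnj z * ((z - g) * cnj (z - g))"
      using False by (simp add: field_simps)
    then show "(fst (hc (antip (Some z))) + snd (hc (antip (Some z))) * cnj g) *
        (snd (hc (Some z)) - g * fst (hc (Some z))) = 1 / cnj z * complex_of_real ((cmod (z - g))\<^sup>2)"
      unfolding e using False by simp
  qed
qed

lemma final_step:
  fixes d :: "nat \<Rightarrow> complex"
  assumes P: "\<And>a b. P a b = (\<Sum>k\<le>N. d k * Af \<gamma> N k a * Bf \<gamma> N k b)"
    and dnz: "\<forall>k\<le>N. d k \<noteq> 0"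
    and mu: "\<forall>l\<le>N. cnj (d l) = \<mu> * d l"
    and inj: "inj_on \<gamma> {..N}"
    and ad: "\<forall>z. P (hc (antip (Some z))) (hc (Some z)) \<noteq> 0"
  shows "\<exists>lam :: nat \<Rightarrow> real. (\<forall>i\<le>N. lam i > 0) \<and> (\<forall>a b. P a b = d 0 * jnr_hom N \<gamma> lam a b)"
proof -
  define s where "s l = Re (d l / d 0)" for l
  have mu0: "\<mu> \<noteq> 0" using mu dnz by (metis complex_cnj_zero_iff mult_zero_left zero_le)
  have ds: "d l = d 0 * complex_of_real (s l)" if "l \<le> N" for l
  proof -
    have "cnj (d l / d 0) = d l / d 0" using mu that mu0 by (simp add: field_simps)
    then have "Im (d l / d 0) = 0" by (metis complex_cnj_cancel_iff complex_is_Real_iff Reals_cnj_iff)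
    then have "d l / d 0 = complex_of_real (s l)" unfolding s_def by (simp add: complex_eq_iff)
    then show ?thesis using dnz by (simp add: field_simps)
  qed
  have snz: "s l \<noteq> 0" if "l \<le> N" for l using ds[OF that] dnz that by auto
  have s0: "s 0 = 1" unfolding s_def using dnz by simp
  define w where "w z = (\<Sum>k\<le>N. s k * (\<Prod>j\<in>{..N} - {k}. (cmod (z - \<gamma> j))\<^sup>2))" for z
  have wnz: "w z \<noteq> 0" for z
  proof -
    obtain \<kappa> where \<kappa>: "\<kappa> \<noteq> 0" "\<And>g. (fst (hc (antip (Some z))) + snd (hc (antip (Some z))) * cnj g) *
        (snd (hc (Some z)) - g * fst (hc (Some z))) = \<kappa> * complex_of_real ((cmod (z - g))\<^sup>2)"
      using antidiag_factor[of z] by blast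
    have AB: "Af \<gamma> N k (hc (antip (Some z))) * Bf \<gamma> N k (hc (Some z)) =
          \<kappa> ^ N * complex_of_real (\<Prod>j\<in>{..N} - {k}. (cmod (z - \<gamma> j))\<^sup>2)" if "k \<le> N" for k
    proof -
      have "Af \<gamma> N k (hc (antip (Some z))) * Bf \<gamma> N k (hc (Some z)) =
           (\<Prod>j\<in>{..N} - {k}. \<kappa> * complex_of_real ((cmod (z - \<gamma> j))\<^sup>2))"
        unfolding Af_def Bf_def prod.distrib[symmetric] by (rule prod.cong[OF refl], rule \<kappa>(2))
      also have "\<dots> = \<kappa> ^ N * complex_of_real (\<Prod>j\<in>{..N} - {k}. (cmod (z - \<gamma> j))\<^sup>2)"
        using that by (simp add: prod.distrib)
      finally show ?thesis .
    qed
    have "P (hc (antip (Some z))) (hc (Some z)) = (\<Sum>k\<le>N. d 0 * \<kappa> ^ N * complex_of_real (s k * (\<Prod>j\<in>{..N} - {k}. (cmod (z - \<gamma> j))\<^sup>2)))"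
      unfolding P
    proof (intro sum.cong refl)
      fix k assume "k \<in> {..N}" then have k: "k \<le> N" by simp
      have "d k * Af \<gamma> N k (hc (antip (Some z))) * Bf \<gamma> N k (hc (Some z)) =
            d k * (Af \<gamma> N k (hc (antip (Some z))) * Bf \<gamma> N k (hc (Some z)))" by (simp add: mult.assoc)
      also have "\<dots> = d 0 * complex_of_real (s k) * (\<kappa> ^ N * complex_of_real (\<Prod>j\<in>{..N} - {k}. (cmod (z - \<gamma> j))\<^sup>2))"
        using ds[OF k] AB[OF k] by simp
      finally show "d k * Af \<gamma> N k (hc (antip (Some z))) * Bf \<gamma> N k (hc (Some z)) =
          d 0 * \<kappa> ^ N * complex_of_real (s k * (\<Prod>j\<in>{..N} - {k}. (cmod (z - \<gamma> j))\<^sup>2))"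
        by (simp add: mult_ac)
    qed
    also have "\<dots> = d 0 * \<kappa> ^ N * complex_of_real (w z)"
      unfolding w_def by (simp add: sum_distrib_left)
    finally show ?thesis using ad by auto
  qed
  have wg: "w (\<gamma> i) = s i * (\<Prod>j\<in>{..N} - {i}. (cmod (\<gamma> i - \<gamma> j))\<^sup>2)" if i: "i \<le> N" for i
    unfolding w_def
    by (rule sum_single) (use i in \<open>auto intro!: prod_zero bexI[of _ i]\<close>)
  have prodpos: "(\<Prod>j\<in>{..N} - {i}. (cmod (\<gamma> i - \<gamma> j))\<^sup>2) > 0" if i: "i \<le> N" for i
  proof (rule prod_pos)
    fix j assume "j \<in> {..N} - {i}"
    then have "\<gamma> i \<noteq> \<gamma> j" using inj i by (auto simp: inj_on_def)
    then show "0 < (cmod (\<gamma> i - \<gamma> j))\<^sup>2" by simp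
  qed
  have spos: "s i > 0" if i: "i \<le> N" for i
  proof (rule ccontr)
    assume "\<not> s i > 0"
    then have "s i < 0" using snz[OF i] by linarith
    define f where "f t = w (\<gamma> 0 + complex_of_real t * (\<gamma> i - \<gamma> 0))" for t
    have "f 1 < 0" unfolding f_def using wg[OF i] prodpos[OF i] \<open>s i < 0\<close>
      by (simp add: mult_neg_pos)
    moreover have "f 0 > 0" unfolding f_def using wg[of 0] prodpos[of 0] s0 by simp
    moreover have "continuous_on {0..1} f" unfolding f_def w_def
      by (intro continuous_intros)
    ultimately obtain t where "f t = 0"
      using IVT2'[of f 1 0 0] by force
    then show False using wnz unfolding f_def by blast
  qed
  define lam where "lam k = sqrt (s k)" for k
  show ?thesis
  proof (intro exI[of _ lam] conjI allI ballI impI)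
    fix i assume "i \<le> N" then show "lam i > 0" using spos unfolding lam_def by simp
  next
    fix a b
    have "d 0 * jnr_hom N \<gamma> lam a b = (\<Sum>k\<le>N. d 0 * complex_of_real (s k) * Af \<gamma> N k a * Bf \<gamma> N k b)"
      unfolding jnr_hom_def Af_def Bf_def lam_def sum_distrib_left
      by (intro sum.cong) (auto simp: spos less_imp_le prod.distrib mult_ac)
    also have "\<dots> = P a b" unfolding P
    proof (intro sum.cong refl)
      fix k assume "k \<in> {..N}" then have k: "k \<le> N" by simp
      show "d 0 * complex_of_real (s k) * Af \<gamma> N k a * Bf \<gamma> N k b = d k * Af \<gamma> N k a * Bf \<gamma> N k b"
        using ds[OF k] by simp
    qed
    finally show "P a b = d 0 * jnr_hom N \<gamma> lam a b" by simp
  qed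
qed

lemma ulim_comb:
  fixes \<alpha> :: "nat \<Rightarrow> nat \<Rightarrow> complex" and \<phi> :: "nat \<Rightarrow> complex \<Rightarrow> complex"
  assumes "finite I" "\<And>i. i \<in> I \<Longrightarrow> (\<alpha> i \<longlongrightarrow> a i) sequentially" "compact K"
    "\<And>i. i \<in> I \<Longrightarrow> continuous_on K (\<phi> i)"
  shows "uniform_limit K (\<lambda>m z. \<Sum>i\<in>I. \<alpha> i m * \<phi> i z) (\<lambda>z. \<Sum>i\<in>I. a i * \<phi> i z) sequentially"
  using assms(1,2,4)
proof (induction I rule: finite_induct)
  case empty
  show ?case by (simp add: uniform_limit_const)
next
  case (insert i I)
  have u1: "uniform_limit K (\<lambda>m z. \<alpha> i m) (\<lambda>z. a i) sequentially"
    using insert.prems(1)[of i] by (auto simp: uniform_limit_iff tendsto_iff)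
  have u2: "uniform_limit K (\<lambda>m. \<phi> i) (\<phi> i) sequentially" by (rule uniform_limit_const)
  have b1: "bounded ((\<lambda>z. a i) ` K)"
    by (rule bounded_subset[of "{a i}"]) auto
  have b2: "bounded (\<phi> i ` K)"
    using insert.prems(2)[of i] assms(3) by (intro compact_imp_bounded compact_continuous_image) auto
  have u3: "uniform_limit K (\<lambda>m z. \<alpha> i m * \<phi> i z) (\<lambda>z. a i * \<phi> i z) sequentially"
    using uniform_lim_mult[OF u1 u2 b1 b2] by simp
  have "uniform_limit K (\<lambda>m z. \<alpha> i m * \<phi> i z + (\<Sum>i\<in>I. \<alpha> i m * \<phi> i z))
          (\<lambda>z. a i * \<phi> i z + (\<Sum>i\<in>I. a i * \<phi> i z)) sequentially"
    by (intro uniform_limit_add u3 insert.IH) (use insert.prems in auto)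
  then show ?case using insert.hyps by simp
qed

lemma root_near:
  fixes \<beta> :: "nat \<Rightarrow> complex \<Rightarrow> complex" and \<phi> :: "nat \<Rightarrow> complex \<Rightarrow> complex"
  assumes I: "finite I"
    and bc: "\<And>i. i \<in> I \<Longrightarrow> isCont (\<beta> i) zc"
    and ph: "\<And>i. i \<in> I \<Longrightarrow> \<phi> i holomorphic_on UNIV"
    and r: "r > 0"
    and g0: "(\<Sum>i\<in>I. \<beta> i zc * \<phi> i xc) = 0"
    and g1: "yc \<in> ball xc r" "(\<Sum>i\<in>I. \<beta> i zc * \<phi> i yc) \<noteq> 0"
    and zs: "zs \<longlonglongrightarrow> zc"
  shows "eventually (\<lambda>n. \<exists>z\<in>ball xc r. (\<Sum>i\<in>I. \<beta> i (zs n) * \<phi> i z) = 0) sequentially"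
proof (rule ccontr)
  assume "\<not> ?thesis"
  then obtain \<sigma> :: "nat \<Rightarrow> nat" where \<sigma>: "strict_mono \<sigma>"
    "\<And>m. \<not> (\<exists>z\<in>ball xc r. (\<Sum>i\<in>I. \<beta> i (zs (\<sigma> m)) * \<phi> i z) = 0)"
    using not_eventually_sequentiallyD by blast
  have zs': "(\<lambda>m. zs (\<sigma> m)) \<longlonglongrightarrow> zc"
    using LIMSEQ_subseq_LIMSEQ[OF zs \<sigma>(1)] by (simp add: comp_def)
  define g where "g = (\<lambda>z. \<Sum>i\<in>I. \<beta> i zc * \<phi> i z)"
  have "g xc \<noteq> 0"
  proof (rule Hurwitz_no_zeros[of "ball xc r" "\<lambda>m z. \<Sum>i\<in>I. \<beta> i (zs (\<sigma> m)) * \<phi> i z" g xc])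
    show "open (ball xc r)" "connected (ball xc r)" by auto
    show "xc \<in> ball xc r" using r by simp
    fix m
    show "(\<lambda>z. \<Sum>i\<in>I. \<beta> i (zs (\<sigma> m)) * \<phi> i z) holomorphic_on ball xc r"
      using ph by (intro holomorphic_intros) (auto intro: holomorphic_on_subset)
  next
    show "g holomorphic_on ball xc r" unfolding g_def
      using ph by (intro holomorphic_intros) (auto intro: holomorphic_on_subset)
  next
    fix K :: "complex set" assume Kc: "compact K" "K \<subseteq> ball xc r"
    show "uniform_limit K (\<lambda>m z. \<Sum>i\<in>I. \<beta> i (zs (\<sigma> m)) * \<phi> i z) g sequentially"
      unfolding g_def
    proof (rule ulim_comb[OF I _ Kc(1)])
      fix i assume i: "i \<in> I"
      show "(\<lambda>m. \<beta> i (zs (\<sigma> m))) \<longlonglongrightarrow> \<beta> i zc"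
        using isCont_tendsto_compose[OF bc[OF i] zs'] .
      show "continuous_on K (\<phi> i)"
        using ph[OF i] holomorphic_on_imp_continuous_on continuous_on_subset by blast
    qed
  next
    show "\<not> g constant_on ball xc r"
    proof
      assume "g constant_on ball xc r"
      then obtain c where "\<forall>z\<in>ball xc r. g z = c" unfolding constant_on_def by blast
      then have "g yc = g xc" using g1(1) r by simp
      then show False using g0 g1(2) unfolding g_def by simp
    qed
  next
    fix m z assume "z \<in> ball xc r"
    then show "(\<Sum>i\<in>I. \<beta> i (zs (\<sigma> m)) * \<phi> i z) \<noteq> 0" using \<sigma>(2)[of m] by blast
  qed
  then show False using g0 unfolding g_def by simp
qed

lemma tau_formula:
  assumes "\<eta> \<noteq> 0" "\<zeta> \<noteq> 0" "i \<le> N"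
  shows "Af \<gamma> N i (1, - 1 / cnj \<zeta>) * Bf \<gamma> N i (1, - 1 / cnj \<eta>) =
         (- 1 / (cnj \<zeta> * cnj \<eta>)) ^ N * cnj (Af \<gamma> N i (1, \<eta>) * Bf \<gamma> N i (1, \<zeta>))"
proof -
  have f: "(1 + (- 1 / cnj \<zeta>) * cnj (\<gamma> j)) * (- 1 / cnj \<eta> - \<gamma> j * 1) =
        (- 1 / (cnj \<zeta> * cnj \<eta>)) * cnj ((1 + \<eta> * cnj (\<gamma> j)) * (\<zeta> - \<gamma> j * 1))" for j
    using assms by (simp add: field_simps)
  have "Af \<gamma> N i (1, - 1 / cnj \<zeta>) * Bf \<gamma> N i (1, - 1 / cnj \<eta>) =
        (\<Prod>j\<in>{..N} - {i}. (- 1 / (cnj \<zeta> * cnj \<eta>)) * cnj ((1 + \<eta> * cnj (\<gamma> j)) * (\<zeta> - \<gamma> j * 1)))"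
    unfolding Af_def Bf_def prod.distrib[symmetric] fst_conv snd_conv f ..
  also have "\<dots> = (- 1 / (cnj \<zeta> * cnj \<eta>)) ^ N * (\<Prod>j\<in>{..N} - {i}. cnj ((1 + \<eta> * cnj (\<gamma> j)) * (\<zeta> - \<gamma> j * 1)))"
    by (subst prod.distrib) (simp add: assms(3))
  also have "(\<Prod>j\<in>{..N} - {i}. cnj ((1 + \<eta> * cnj (\<gamma> j)) * (\<zeta> - \<gamma> j * 1))) = cnj (Af \<gamma> N i (1, \<eta>) * Bf \<gamma> N i (1, \<zeta>))"
    unfolding Af_def Bf_def fst_conv snd_conv cnj_prod complex_cnj_mult by (simp only: prod.distrib)
  finally show ?thesis .
qed

lemma phase_step:
  fixes d :: "nat \<Rightarrow> complex" and P :: "complex \<times> complex \<Rightarrow> complex \<times> complex \<Rightarrow> complex"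
  assumes N1: "N \<ge> 1"
    and P: "\<And>a b. P a b = (\<Sum>k\<le>N. d k * Af \<gamma> N k a * Bf \<gamma> N k b)"
    and dnz: "\<forall>k\<le>N. d k \<noteq> 0"
    and inj: "inj_on \<gamma> {..N}"
    and tau: "\<And>\<eta> \<zeta>. \<eta> \<noteq> 0 \<Longrightarrow> \<zeta> \<noteq> 0 \<Longrightarrow> P (1, \<eta>) (1, \<zeta>) = 0 \<Longrightarrow> P (1, - 1 / cnj \<zeta>) (1, - 1 / cnj \<eta>) = 0"
  shows "\<exists>\<mu>. \<forall>l\<le>N. cnj (d l) = \<mu> * d l"
proof -
  define \<phi> where "\<phi> i \<eta> = (\<Prod>j\<in>{..N} - {i}. 1 + \<eta> * cnj (\<gamma> j))" for i \<eta>
  define \<beta> where "\<beta> i \<zeta> = d i * Bf \<gamma> N i (1, \<zeta>)" for i \<zeta>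
  define pz where "pz \<zeta> \<eta> = (\<Sum>i\<le>N. \<beta> i \<zeta> * \<phi> i \<eta>)" for \<zeta> \<eta>
  define qz where "qz \<zeta> \<eta> = (\<Sum>i\<le>N. cnj (d i) * Bf \<gamma> N i (1, \<zeta>) * \<phi> i \<eta>)" for \<zeta> \<eta>
  have Af1: "Af \<gamma> N i (1, \<eta>) = \<phi> i \<eta>" for i \<eta> unfolding Af_def \<phi>_def by simp
  have Pz: "P (1, \<eta>) (1, \<zeta>) = pz \<zeta> \<eta>" for \<eta> \<zeta>
    unfolding P pz_def \<beta>_def Af1 by (simp add: mult_ac)
  have tq: "qz \<zeta> \<eta> = 0" if tq1: "\<eta> \<noteq> 0" "\<zeta> \<noteq> 0" "pz \<zeta> \<eta> = 0" for \<eta> \<zeta>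
  proof -
    have "P (1, - 1 / cnj \<zeta>) (1, - 1 / cnj \<eta>) = 0" using tau tq1 Pz by metis
    moreover have "P (1, - 1 / cnj \<zeta>) (1, - 1 / cnj \<eta>) = (- 1 / (cnj \<zeta> * cnj \<eta>)) ^ N * cnj (qz \<zeta> \<eta>)"
    proof -
      have "P (1, - 1 / cnj \<zeta>) (1, - 1 / cnj \<eta>) =
          (\<Sum>k\<le>N. d k * (Af \<gamma> N k (1, - 1 / cnj \<zeta>) * Bf \<gamma> N k (1, - 1 / cnj \<eta>)))"
        unfolding P by (simp add: mult.assoc)
      also have "\<dots> = (\<Sum>k\<le>N. (- 1 / (cnj \<zeta> * cnj \<eta>)) ^ N * cnj (cnj (d k) * Bf \<gamma> N k (1, \<zeta>) * \<phi> k \<eta>))"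
      proof (intro sum.cong refl)
        fix k assume "k \<in> {..N}"
        then have k: "k \<le> N" by simp
        show "d k * (Af \<gamma> N k (1, - 1 / cnj \<zeta>) * Bf \<gamma> N k (1, - 1 / cnj \<eta>)) =
          (- 1 / (cnj \<zeta> * cnj \<eta>)) ^ N * cnj (cnj (d k) * Bf \<gamma> N k (1, \<zeta>) * \<phi> k \<eta>)"
          by (subst tau_formula[OF tq1(1,2) k]) (simp add: Af1 mult_ac)
      qed
      also have "\<dots> = (- 1 / (cnj \<zeta> * cnj \<eta>)) ^ N * cnj (qz \<zeta> \<eta>)"
        unfolding qz_def by (simp add: sum_distrib_left)
      finally show ?thesis .
    qed
    moreover have "(- 1 / (cnj \<zeta> * cnj \<eta>)) ^ N \<noteq> 0" using tq1 by simp
    ultimately show ?thesis by (metis complex_cnj_zero_iff mult_eq_0_iff)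
  qed

  obtain k0 where k0: "k0 \<le> N" "\<forall>j\<le>N. j \<noteq> k0 \<longrightarrow> \<gamma> j \<noteq> 0"
  proof (cases "\<exists>m\<le>N. \<gamma> m = 0")
    case True
    then obtain m where m: "m \<le> N" "\<gamma> m = 0" by blast
    have "\<forall>j\<le>N. j \<noteq> m \<longrightarrow> \<gamma> j \<noteq> 0" using m inj unfolding inj_on_def by (metis atMost_iff)
    then show ?thesis using m that by blast
  next
    case False then show ?thesis using that[of 0] by auto
  qed
  define J where "J = {..N} - {k0}"
  have finJ: "finite J" unfolding J_def by simp
  have cardJ: "card J = N" unfolding J_def using k0 by simp
  have Jne: "J \<noteq> {}" using cardJ N1 by auto
  define x where "x j = - 1 / cnj (\<gamma> j)" for j
  have gJ: "\<gamma> j \<noteq> 0" if "j \<in> J" for j using k0 that unfolding J_def by auto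
  have xnz: "x j \<noteq> 0" if "j \<in> J" for j using gJ[OF that] unfolding x_def by simp
  have xroot: "1 + \<eta> * cnj (\<gamma> j) = 0 \<longleftrightarrow> \<eta> = x j" if "j \<in> J" for j \<eta>
  proof -
    have c: "cnj (\<gamma> j) \<noteq> 0" using gJ[OF that] by simp
    have "1 + \<eta> * cnj (\<gamma> j) = 0 \<longleftrightarrow> \<eta> * cnj (\<gamma> j) = - 1" by (simp add: add_eq_0_iff)
    also have "\<dots> \<longleftrightarrow> \<eta> = - 1 / cnj (\<gamma> j)" using c by (metis eq_divide_eq)
    finally show ?thesis unfolding x_def .
  qed
  have xinj: "x j \<noteq> x l" if xj: "j \<in> J" "l \<in> J" "j \<noteq> l" for j l
  proof
    assume "x j = x l"
    then have "cnj (\<gamma> j) = cnj (\<gamma> l)" unfolding x_def by simp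
    then have "\<gamma> j = \<gamma> l" by simp
    then show False using inj xj unfolding J_def inj_on_def by auto
  qed
  define M where "M = (\<lambda>(j, l). cmod (x j - x l)) ` {(j, l). j \<in> J \<and> l \<in> J \<and> j \<noteq> l} \<union> (\<lambda>j. cmod (x j)) ` J"
  have "{(j, l). j \<in> J \<and> l \<in> J \<and> j \<noteq> l} \<subseteq> J \<times> J" by auto
  then have "finite {(j, l). j \<in> J \<and> l \<in> J \<and> j \<noteq> l}" using finJ finite_subset by blast
  then have finM: "finite M" unfolding M_def using finJ by simp
  have Mne: "M \<noteq> {}" unfolding M_def using Jne by auto
  have Mpos: "\<forall>m\<in>M. m > 0" unfolding M_def using xnz xinj by auto
  define r where "r = Min M / 3"
  have rpos: "r > 0" unfolding r_def using Min_in[OF finM Mne] Mpos by auto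
  have rsep: "2 * r < cmod (x j - x l)" if "j \<in> J" "l \<in> J" "j \<noteq> l" for j l
  proof -
    have "cmod (x j - x l) \<in> M" unfolding M_def using that by force
    then have "Min M \<le> cmod (x j - x l)" using Min_le[OF finM] by blast
    then show ?thesis using rpos unfolding r_def by linarith
  qed
  have rx: "r < cmod (x j)" if "j \<in> J" for j
  proof -
    have "cmod (x j) \<in> M" unfolding M_def using that by auto
    then have "Min M \<le> cmod (x j)" using Min_le[OF finM] by blast
    then show ?thesis using rpos unfolding r_def by linarith
  qed

  define zs where "zs n = \<gamma> k0 + complex_of_real (inverse (real (Suc n)))" for n
  have "(\<lambda>n. \<gamma> k0 + complex_of_real (inverse (real (Suc n)))) \<longlonglongrightarrow> \<gamma> k0 + complex_of_real 0"
    by (intro tendsto_intros LIMSEQ_inverse_real_of_nat)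
  then have zs_lim: "zs \<longlonglongrightarrow> \<gamma> k0" unfolding zs_def by simp

  have Bk0: "Bf \<gamma> N i (1, \<gamma> k0) = 0" if "i \<le> N" "i \<noteq> k0" for i
    using Bf_v_zero[of i N k0 \<gamma>] that k0 by simp
  have Bk0nz: "Bf \<gamma> N k0 (1, \<gamma> k0) \<noteq> 0" using Bf_v_nz[OF inj k0(1)] by simp
  have g_eq: "pz (\<gamma> k0) \<eta> = \<beta> k0 (\<gamma> k0) * \<phi> k0 \<eta>" for \<eta>
    unfolding pz_def by (rule sum_single) (use k0 Bk0 in \<open>auto simp: \<beta>_def\<close>)
  have \<phi>k0: "\<phi> k0 \<eta> = 0 \<longleftrightarrow> (\<exists>l\<in>J. \<eta> = x l)" for \<eta>
    unfolding \<phi>_def J_def[symmetric] using xroot by (simp add: prod_zero_iff finJ)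
  have \<beta>k0: "\<beta> k0 (\<gamma> k0) \<noteq> 0" unfolding \<beta>_def using dnz k0 Bk0nz by simp

  have E1: "\<forall>j\<in>J. eventually (\<lambda>n. \<exists>z\<in>ball (x j) r. pz (zs n) z = 0) sequentially"
  proof
    fix j assume j: "j \<in> J"
    have y1: "x j + complex_of_real (r / 2) \<in> ball (x j) r" using rpos by (simp add: dist_norm)
    have "\<phi> k0 (x j + complex_of_real (r / 2)) \<noteq> 0"
    proof
      assume "\<phi> k0 (x j + complex_of_real (r / 2)) = 0"
      then obtain l where l: "l \<in> J" "x j + complex_of_real (r / 2) = x l" using \<phi>k0 by blast
      show False
      proof (cases "l = j")
        case True then show False using l rpos by simp
      next
        case False
        have "x j - x l = - complex_of_real (r / 2)" using l(2) by (simp add: algebra_simps)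
        then have "cmod (x j - x l) = r / 2" using rpos by simp
        then show False using rsep[OF j l(1)] False rpos by auto
      qed
    qed
    then have g1: "(\<Sum>i\<le>N. \<beta> i (\<gamma> k0) * \<phi> i (x j + complex_of_real (r / 2))) \<noteq> 0"
      using g_eq \<beta>k0 unfolding pz_def by simp
    have g0: "(\<Sum>i\<le>N. \<beta> i (\<gamma> k0) * \<phi> i (x j)) = 0"
      using g_eq[of "x j"] \<phi>k0[of "x j"] j unfolding pz_def by auto
    have "eventually (\<lambda>n. \<exists>z\<in>ball (x j) r. (\<Sum>i\<le>N. \<beta> i (zs n) * \<phi> i z) = 0) sequentially"
    proof (rule root_near[where I="{..N}" and \<beta>=\<beta> and zc="\<gamma> k0" and \<phi>=\<phi> and r=r and xc="x j"
          and yc="x j + complex_of_real (r / 2)" and zs=zs])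
      show "finite {..N}" by simp
      show "isCont (\<beta> i) (\<gamma> k0)" for i unfolding \<beta>_def Bf_def by (intro continuous_intros)
      show "\<phi> i holomorphic_on UNIV" for i unfolding \<phi>_def by (intro holomorphic_intros)
    qed (use rpos g0 y1 g1 zs_lim in auto)
    then show "eventually (\<lambda>n. \<exists>z\<in>ball (x j) r. pz (zs n) z = 0) sequentially"
      unfolding pz_def .
  qed
  have ne1: "(1::complex) + of_nat m \<noteq> 0" for m :: nat
    by (metis add.commute of_nat_Suc of_nat_eq_0_iff nat.distinct(1))
  have E2: "eventually (\<lambda>n. zs n \<noteq> 0 \<and> (\<forall>i\<in>{..N}. zs n \<noteq> \<gamma> i)) sequentially"
  proof -
    have "eventually (\<lambda>n. zs n \<noteq> \<gamma> i) sequentially" if "i \<in> {..N}" for i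
    proof (cases "i = k0")
      case True then show ?thesis unfolding zs_def by (simp add: ne1)
    next
      case False
      then have "\<gamma> k0 \<noteq> \<gamma> i" using inj that k0 unfolding inj_on_def by auto
      then show ?thesis using tendsto_imp_eventually_ne[OF zs_lim] by blast
    qed
    then have 1: "eventually (\<lambda>n. \<forall>i\<in>{..N}. zs n \<noteq> \<gamma> i) sequentially"
      by (intro eventually_ball_finite) auto
    have 2: "eventually (\<lambda>n. zs n \<noteq> 0) sequentially"
    proof (cases "\<gamma> k0 = 0")
      case True then show ?thesis unfolding zs_def by (simp add: ne1)
    next
      case False then show ?thesis using tendsto_imp_eventually_ne[OF zs_lim] by blast
    qed
    show ?thesis using eventually_conj[OF 2 1] by simp
  qed
  have "eventually (\<lambda>n. (zs n \<noteq> 0 \<and> (\<forall>i\<in>{..N}. zs n \<noteq> \<gamma> i)) \<and> (\<forall>j\<in>J. \<exists>z\<in>ball (x j) r. pz (zs n) z = 0)) sequentially"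
    using eventually_conj[OF E2 eventually_ball_finite[OF finJ E1]] by simp
  then obtain n where n: "zs n \<noteq> 0" "\<forall>i\<in>{..N}. zs n \<noteq> \<gamma> i" "\<forall>j\<in>J. \<exists>z\<in>ball (x j) r. pz (zs n) z = 0"
    unfolding eventually_sequentially by blast
  define \<zeta> where "\<zeta> = zs n"
  obtain rt where rt: "\<forall>j\<in>J. rt j \<in> ball (x j) r \<and> pz \<zeta> (rt j) = 0"
    using n(3) unfolding \<zeta>_def by metis
  have rtnz: "rt j \<noteq> 0" if "j \<in> J" for j
  proof
    assume "rt j = 0"
    then have "cmod (x j) < r" using rt that by (metis diff_zero dist_norm mem_ball)
    then show False using rx[OF that] by simp
  qed
  have rtinj: "inj_on rt J"
  proof (rule inj_onI, rule ccontr)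
    fix j l assume jl: "j \<in> J" "l \<in> J" "rt j = rt l" "j \<noteq> l"
    have "x j - x l = (x j - rt j) + (rt l - x l)" using jl(3) by simp
    then have "cmod (x j - x l) \<le> cmod (x j - rt j) + cmod (rt l - x l)"
      by (metis norm_triangle_ineq)
    also have "\<dots> < r + r" using rt jl(1,2) by (intro add_strict_mono) (auto simp: dist_norm norm_minus_commute)
    finally show False using rsep[OF jl(1,2,4)] by simp
  qed
  have Bnz: "Bf \<gamma> N i (1, \<zeta>) \<noteq> 0" if "i \<le> N" for i
    unfolding Bf_def using n(2) unfolding \<zeta>_def by auto
  have qrt: "qz \<zeta> (rt j) = 0" if "j \<in> J" for j
    using tq[OF rtnz[OF that]] n(1) rt that unfolding \<zeta>_def by auto

  have Hform: "hform N (\<lambda>a. \<Sum>i\<le>N. e i * Af \<gamma> N i a)" for e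
    by (rule hform_sum) (auto intro: hform_Af)
  have Heval: "(\<Sum>i\<le>N. e i * Af \<gamma> N i (hc (Some \<eta>))) = (\<Sum>i\<le>N. e i * \<phi> i \<eta>)" for e \<eta>
    by (simp add: Af1)
  have Hu: "(\<Sum>i\<le>N. e i * Af \<gamma> N i (hc (antip (Some (\<gamma> l))))) = e l * Af \<gamma> N l (hc (antip (Some (\<gamma> l))))"
    if "l \<le> N" for e l
    by (rule sum_single) (use that Af_u_zero in auto)
  have Hzero: "\<forall>l\<le>N. e l = 0"
    if fin: "finite X" "card X > N" "\<forall>x\<in>X. (\<Sum>i\<le>N. e i * Af \<gamma> N i (hc x)) = 0" for e X
  proof (intro allI impI)
    fix l assume l: "l \<le> N"
    have "(\<Sum>i\<le>N. e i * Af \<gamma> N i (hc (antip (Some (\<gamma> l))))) = 0"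
      using hform_zero_pts[OF Hform fin] by simp
    then show "e l = 0" using Hu[OF l] Af_u_nz[OF inj l] by simp
  qed

  have "\<exists>y0. pz \<zeta> y0 \<noteq> 0"
  proof (rule ccontr)
    assume "\<nexists>y0. pz \<zeta> y0 \<noteq> 0"
    then have all0: "\<forall>\<eta>. (\<Sum>i\<le>N. \<beta> i \<zeta> * \<phi> i \<eta>) = 0" unfolding pz_def by auto
    have injS: "inj_on (\<lambda>m::nat. Some (complex_of_nat m)) {..N}" by (auto simp: inj_on_def)
    have "\<forall>l\<le>N. \<beta> l \<zeta> = 0"
    proof (rule Hzero[of "(\<lambda>m::nat. Some (complex_of_nat m)) ` {..N}"])
      show "finite ((\<lambda>m::nat. Some (complex_of_nat m)) ` {..N})" by simp
      show "card ((\<lambda>m::nat. Some (complex_of_nat m)) ` {..N}) > N" using card_image[OF injS] by simp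
      show "\<forall>x\<in>(\<lambda>m::nat. Some (complex_of_nat m)) ` {..N}. (\<Sum>i\<le>N. \<beta> i \<zeta> * Af \<gamma> N i (hc x)) = 0"
        using all0 Heval by auto
    qed
    then have "\<beta> k0 \<zeta> = 0" using k0 by simp
    then show False using dnz k0 Bnz[OF k0(1)] unfolding \<beta>_def by simp
  qed
  then obtain y0 where y0: "pz \<zeta> y0 \<noteq> 0" by blast
  define p0 where "p0 = pz \<zeta> y0"
  define q0 where "q0 = qz \<zeta> y0"
  define e where "e i = (d i * q0 - cnj (d i) * p0) * Bf \<gamma> N i (1, \<zeta>)" for i
  have He: "(\<Sum>i\<le>N. e i * \<phi> i \<eta>) = pz \<zeta> \<eta> * q0 - qz \<zeta> \<eta> * p0" for \<eta>
  proof -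
    have "pz \<zeta> \<eta> * q0 - qz \<zeta> \<eta> * p0 = (\<Sum>i\<le>N. \<beta> i \<zeta> * \<phi> i \<eta> * q0) - (\<Sum>i\<le>N. cnj (d i) * Bf \<gamma> N i (1, \<zeta>) * \<phi> i \<eta> * p0)"
      unfolding pz_def qz_def by (simp add: sum_distrib_right)
    also have "\<dots> = (\<Sum>i\<le>N. \<beta> i \<zeta> * \<phi> i \<eta> * q0 - cnj (d i) * Bf \<gamma> N i (1, \<zeta>) * \<phi> i \<eta> * p0)"
      by (simp add: sum_subtractf)
    also have "\<dots> = (\<Sum>i\<le>N. e i * \<phi> i \<eta>)"
      unfolding e_def \<beta>_def by (intro sum.cong refl) (simp add: algebra_simps)
    finally show ?thesis by simp
  qed
  define X where "X = insert (Some y0) ((\<lambda>j. Some (rt j)) ` J)"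
  have "\<forall>l\<le>N. e l = 0"
  proof (rule Hzero[of X])
    show "finite X" unfolding X_def using finJ by simp
    have y0n: "Some y0 \<notin> (\<lambda>j. Some (rt j)) ` J" using rt y0 by auto
    have injr: "inj_on (\<lambda>j. Some (rt j)) J" using rtinj unfolding inj_on_def by simp
    show "card X > N" unfolding X_def using y0n card_image[OF injr] finJ cardJ by simp
    show "\<forall>x\<in>X. (\<Sum>i\<le>N. e i * Af \<gamma> N i (hc x)) = 0"
      unfolding X_def using Heval He rt qrt unfolding p0_def q0_def by (auto simp: mult.commute)
  qed
  then have "cnj (d l) = q0 / p0 * d l" if "l \<le> N" for l
  proof -
    have "(d l * q0 - cnj (d l) * p0) * Bf \<gamma> N l (1, \<zeta>) = 0" using \<open>\<forall>l\<le>N. e l = 0\<close> that unfolding e_def by simp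
    then have "d l * q0 - cnj (d l) * p0 = 0" using Bnz[OF that] by simp
    then show ?thesis using y0 unfolding p0_def by (simp add: field_simps)
  qed
  then show ?thesis by blast
qed

theorem mainTheorem3:
  fixes N :: nat and c :: "nat \<Rightarrow> nat \<Rightarrow> complex" and S :: "(P1 \<times> P1) set"
    and \<gamma> :: "nat \<Rightarrow> complex"
  assumes "N \<ge> 1"
    and "\<exists>i\<le>N. \<exists>j\<le>N. c i j \<noteq> 0"
    and "S = curve_of (bihom N c)"
    and "tau ` S = S"
    and "S \<inter> antidiag = {}"
    and "inj_on \<gamma> {..N}"
    and "\<forall>i\<le>N. \<forall>j\<le>N. i \<noteq> j \<longrightarrow> (antip (Some (\<gamma> i)), Some (\<gamma> j)) \<in> S"
  shows "\<exists>lam :: nat \<Rightarrow> real. (\<forall>i\<le>N. lam i > 0) \<and> S = curve_of (jnr_hom N \<gamma> lam)"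
proof -
  note N1 = assms(1) and Sdef = assms(3) and tauS = assms(4) and adS = assms(5) and inj = assms(6)
    and gridS = assms(7)
  define P where "P = bihom N c"
  have memS: "(x, y) \<in> S \<longleftrightarrow> P (hc x) (hc y) = 0" for x y
    unfolding Sdef curve_of_def P_def by simp
  have grid: "\<forall>i\<le>N. \<forall>j\<le>N. i \<noteq> j \<longrightarrow> bihom N c (hc (antip (Some (\<gamma> i)))) (hc (Some (\<gamma> j))) = 0"
    using gridS memS unfolding P_def by blast
  define d where "d k = bihom N c (hc (antip (Some (\<gamma> k)))) (hc (Some (\<gamma> k)))
            / (Af \<gamma> N k (hc (antip (Some (\<gamma> k)))) * Bf \<gamma> N k (hc (Some (\<gamma> k))))" for k
  have Pd: "P a b = (\<Sum>k\<le>N. d k * Af \<gamma> N k a * Bf \<gamma> N k b)" for a b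
    unfolding P_def d_def by (rule diag_form[OF inj grid])
  have notS: "(antip (Some z), Some z) \<notin> S" for z
    using adS unfolding antidiag_def by blast
  have ad: "\<forall>z. P (hc (antip (Some z))) (hc (Some z)) \<noteq> 0"
    using notS memS by blast
  have dnz: "\<forall>k\<le>N. d k \<noteq> 0"
  proof (intro allI impI)
    fix k assume k: "k \<le> N"
    show "d k \<noteq> 0" unfolding d_def using ad[rule_format, of "\<gamma> k"] Af_u_nz[OF inj k] Bf_v_nz[OF inj k]
      unfolding P_def by simp
  qed
  have tau: "P (1, - 1 / cnj \<zeta>) (1, - 1 / cnj \<eta>) = 0"
    if "\<eta> \<noteq> 0" "\<zeta> \<noteq> 0" "P (1, \<eta>) (1, \<zeta>) = 0" for \<eta> \<zeta>
  proof -
    have "(Some \<eta>, Some \<zeta>) \<in> S" using memS that(3) by simp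
    then have "tau (Some \<eta>, Some \<zeta>) \<in> S" using tauS by blast
    moreover have "tau (Some \<eta>, Some \<zeta>) = (Some (- 1 / cnj \<zeta>), Some (- 1 / cnj \<eta>))"
      using that unfolding tau_def by simp
    ultimately show ?thesis using memS by simp
  qed
  obtain \<mu> where mu: "\<forall>l\<le>N. cnj (d l) = \<mu> * d l"
    using phase_step[OF N1 Pd dnz inj tau] by blast
  obtain lam :: "nat \<Rightarrow> real" where lam: "\<forall>i\<le>N. lam i > 0" "\<forall>a b. P a b = d 0 * jnr_hom N \<gamma> lam a b"
    using final_step[OF Pd dnz mu inj ad] by blast
  have d0: "d 0 \<noteq> 0" using dnz by simp
  have "S = curve_of (jnr_hom N \<gamma> lam)"
  proof (rule set_eqI)
    fix xy :: "P1 \<times> P1"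
    obtain x y where xy: "xy = (x, y)" by (cases xy)
    show "xy \<in> S \<longleftrightarrow> xy \<in> curve_of (jnr_hom N \<gamma> lam)"
    proof -
      have "P (hc x) (hc y) = d 0 * jnr_hom N \<gamma> lam (hc x) (hc y)" using lam(2) by blast
      then show ?thesis unfolding xy memS curve_of_def using d0 by simp
    qed
  qed
  then show ?thesis using lam(1) by blast
qed

end
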